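(* Let $h_{SR_k}, h_{R_kD}, h_{SP}, h_{R_kP}, h_{R_kR_k} \in \mathbb{C}$, $\sigma_D > 0$, $\zeta \ge 0$, and set $\hat{\zeta} = |h_{R_kR_k}|^2 \zeta$, assumed $>0$. Let $\bar{\mathcal{I}}_P > 0$, $P_S^{\max} > 0$, $P_{R_k}^{\max} > 0$. Consider the optimization problem (Problem 2) $$\max_{P_S, P_{R_k}} \ \bar{\mathcal{C}}_k(P_S, P_{R_k}) = \frac{\frac{P_{R_k}|h_{R_kD}|^2}{\sigma_D^2}\cdot\frac{P_S |h_{SR_k}|^2}{\hat{\zeta} P_{R_k}}}{1 + \frac{P_{R_k}|h_{R_kD}|^2}{\sigma_D^2} + \frac{P_S |h_{SR_k}|^2}{\hat{\zeta} P_{R_k}}}$$ subject to $$|h_{SP}|^2 P_S + |h_{R_kP}|^2 P_{R_k}(1+\zeta) \le \bar{\mathcal{I}}_P,\quad 0 \le P_S \le P_S^{\max},\quad 0 \le P_{R_k} \le P_{R_k}^{\max}.$$ Then Problem 2 is a nonconvex optimization problem in the joint variable $(P_S, P_{R_k})$.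
   Context: A maximization problem is called a convex optimization problem if its objective is a concave function over a convex feasible set; it is nonconvex otherwise. The objective $\bar{\mathcal{C}}_k$ is defined for $P_{R_k} > 0$. The first constraint is the interference at the primary receiver in the non-coherent scenario. *)

theory Defs
  imports "HOL-Analysis.Analysis"
begin

text \<open>Objective of Problem 2, as a function of the joint variable (P_S, P_R).
  zhat = |h_RR|^2 * zeta.\<close>
definition Cbar :: "complex \<Rightarrow> complex \<Rightarrow> real \<Rightarrow> real \<Rightarrow> real \<times> real \<Rightarrow> real" where
  "Cbar hSR hRD sigmaD zhat p =
     (let PS = fst p; PR = snd p;
          g1 = PR * (cmod hRD)^2 / sigmaD^2;
          g2 = PS * (cmod hSR)^2 / (zhat * PR)
      in (g1 * g2) / (1 + g1 + g2))"

definition feasible ::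
  "complex \<Rightarrow> complex \<Rightarrow> real \<Rightarrow> real \<Rightarrow> real \<Rightarrow> real \<Rightarrow> (real \<times> real) set" where
  "feasible hSP hRP zeta IP PSmax PRmax =
     {(PS, PR). (cmod hSP)^2 * PS + (cmod hRP)^2 * PR * (1 + zeta) \<le> IP
        \<and> 0 \<le> PS \<and> PS \<le> PSmax \<and> 0 \<le> PR \<and> PR \<le> PRmax}"

text \<open>The objective is only defined for P_R > 0, so the set considered is
  the constraint set restricted to P_R > 0.\<close>
definition convex_max_problem :: "(real \<times> real) set \<Rightarrow> (real \<times> real \<Rightarrow> real) \<Rightarrow> bool" where
  "convex_max_problem D f \<longleftrightarrow> convex D \<and> concave_on D f"

end

theory Submission
  imports Defs
begin

lemma key_ineq:
  fixes s :: real assumes "0 < s" "s \<le> 1/2"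
  shows "2 * (s^3 / (1 + 2 * s + s^2 / 2)) < s^3/(1 + s + s^2) + s^3/(1 + 3 * s + s^2 / 3)"
proof -
  have "2 * (1 / (1 + 2 * s + s^2 / 2)) < 1/(1 + s + s^2) + 1/(1 + 3 * s + s^2 / 3)"
  proof -
    have p1: "0 < 1 + 2 * s + s^2 / 2" "0 < 1 + s + s^2" "0 < 1 + 3 * s + s^2 / 3" using assms by (auto intro: add_pos_nonneg)
    have "s^2 * (5 - 6 * s) > 0" using assms by (intro mult_pos_pos) auto
    hence pos: "(s^2 * (5 - 6 * s) / 3) / ((1 + s + s^2) * (1 + 2 * s + s^2 / 2) * (1 + 3 * s + s^2 / 3)) > 0"
      using p1 assms by (intro divide_pos_pos mult_pos_pos) auto
    have gen: "1/A + 1/C - 2 * (1/B) = (B*C + A*B - 2*A*C) / (A*B*C)" if "A > 0" "B > 0" "C > 0" for A B C :: real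
      using that by (simp add: field_simps)
    have num: "(1 + 2 * s + s^2 / 2) * (1 + 3 * s + s^2 / 3) + (1 + s + s^2) * (1 + 2 * s + s^2 / 2)
       - 2 * (1 + s + s^2) * (1 + 3 * s + s^2 / 3) = s^2 * (5 - 6 * s) / 3"
      by (simp add: field_simps power2_eq_square)
    have "1/(1 + s + s^2) + 1/(1 + 3 * s + s^2 / 3) - 2 * (1 / (1 + 2 * s + s^2 / 2))
       = (s^2 * (5 - 6 * s) / 3) / ((1 + s + s^2) * (1 + 2 * s + s^2 / 2) * (1 + 3 * s + s^2 / 3))"
      unfolding gen[OF p1(2) p1(1) p1(3)] num[symmetric] by (simp add: mult.assoc)
    then show ?thesis using pos by linarith
  qed
  hence "s^3 * (2 * (1 / (1 + 2 * s + s^2 / 2))) < s^3 * (1/(1 + s + s^2) + 1/(1 + 3 * s + s^2 / 3))"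
    using assms by (intro mult_strict_left_mono) auto
  thus ?thesis by (simp add: field_simps)
qed

lemma fval:
  fixes a b t s :: real and j :: real
  assumes "a > 0" "b > 0" "s > 0" "t = s / a" "j > 0"
  shows "(j*t*a) * ((s^2 * t / b) * b / (j*t)) / (1 + j*t*a + (s^2 * t / b) * b / (j*t))
         = s^3 / (1 + j * s + s^2 / j)"
proof -
  have t: "t > 0" using assms by simp
  have s: "s = a * t" using assms by simp
  show ?thesis using assms t unfolding s by (simp add: field_simps power2_eq_square power3_eq_cube)
qed

theorem lemma1:
  fixes hSR hRD hSP hRP hRR :: complex
    and sigmaD zeta IP PSmax PRmax :: real
  assumes "sigmaD > 0" and "zeta \<ge> 0"
    and "(cmod hRR)^2 * zeta > 0"
    and "IP > 0" and "PSmax > 0" and "PRmax > 0"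
    and "hSR \<noteq> 0" and "hRD \<noteq> 0"
  shows "\<not> convex_max_problem
            (feasible hSP hRP zeta IP PSmax PRmax \<inter> {p. snd p > 0})
            (Cbar hSR hRD sigmaD ((cmod hRR)^2 * zeta))"
proof
  define z where "z = (cmod hRR)^2 * zeta"
  define a where "a = (cmod hRD)^2 / sigmaD^2"
  define b where "b = (cmod hSR)^2 / z"
  define D where "D = feasible hSP hRP zeta IP PSmax PRmax \<inter> {p. snd p > 0}"
  define f where "f = Cbar hSR hRD sigmaD z"
  have z: "z > 0" using assms z_def by simp
  have a: "a > 0" using assms by (simp add: a_def)
  have b: "b > 0" using assms z by (simp add: b_def)
  have fx: "f (x, y) = (y * a) * (x * b / y) / (1 + y * a + x * b / y)" for x y
    unfolding f_def Cbar_def a_def b_def Let_def by (simp add: field_simps)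
  define K where "K = (cmod hSP)^2 / (4*b) + 3 * (cmod hRP)^2 * (1 + zeta) + 1"
  have K: "K > 0" unfolding K_def using b assms by (intro add_nonneg_pos) auto
  define t where "t = min (1/(2*a)) (min (PRmax/3) (min (4*b*PSmax) (IP / K)))"
  have t: "t > 0" unfolding t_def using a b K assms by auto
  define s where "s = a * t"
  have "t \<le> 1/(2*a)" unfolding t_def by linarith
  hence "a * t \<le> a * (1/(2*a))" using a by (intro mult_left_mono) auto
  hence s: "s > 0" "s \<le> 1/2" using a t unfolding s_def by auto
  have ts: "t = s / a" using a by (simp add: s_def)
  define x where "x = s^2 * t / b"
  have x0: "x \<ge> 0" using s t b by (simp add: x_def)
  have xle: "x \<le> t / (4*b)"
  proof -
    have "s^2 \<le> (1/2)^2" using s by (intro power_mono) auto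
    hence "s^2 \<le> 1/4" by (simp add: power2_eq_square)
    hence "s^2 * t \<le> (1/4) * t" using t by (intro mult_right_mono) auto
    thus ?thesis using b by (simp add: x_def field_simps)
  qed
  have "t \<le> IP / K" unfolding t_def by linarith
  hence tK: "t * K \<le> IP" using K by (simp add: pos_le_divide_eq)
  have mem: "(x, j*t) \<in> D" if "j \<in> {1,2,3}" for j :: real
  proof -
    have j: "0 < j" "j \<le> 3" using that by auto
    have "j * t \<le> 3 * t" using j t by simp
    also have "3 * t \<le> PRmax" unfolding t_def by linarith
    finally have c1: "j*t \<le> PRmax" .
    have c2: "x \<le> PSmax" using xle b unfolding t_def by (simp add: field_simps min_le_iff_disj)
    have "(cmod hSP)^2 * x \<le> (cmod hSP)^2 * (t/(4*b))" using xle by (intro mult_left_mono) auto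
    moreover have "(cmod hRP)^2 * (j*t) * (1+zeta) \<le> (cmod hRP)^2 * (3*t) * (1+zeta)"
      using j t assms by (intro mult_right_mono mult_left_mono) auto
    moreover have "(cmod hSP)^2 * (t/(4*b)) + (cmod hRP)^2 * (3*t) * (1+zeta) \<le> t * K"
      using t b unfolding K_def by (simp add: field_simps)
    ultimately have c3: "(cmod hSP)^2 * x + (cmod hRP)^2 * (j*t) * (1+zeta) \<le> IP" using tK by linarith
    show ?thesis unfolding D_def feasible_def using c1 c2 c3 x0 j t by auto
  qed
  have fj: "f (x, j*t) = s^3 / (1 + j* s + s^2 / j)" if "j > 0" for j
    unfolding fx x_def using fval[OF a b s(1) ts that] by (simp add: mult.commute mult.left_commute)
  assume "convex_max_problem D f"
  hence cc: "concave_on D f" unfolding convex_max_problem_def by simp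
  have "f ((1 - 1/2) *\<^sub>R (x, 1*t) + (1/2) *\<^sub>R (x, 3*t)) \<ge> (1 - 1/2) * f (x, 1*t) + (1/2) * f (x, 3*t)"
    using mem[of 1] mem[of 3] by (intro concave_onD[OF cc]) auto
  moreover have "(1 - 1/2) *\<^sub>R (x, 1*t) + (1/2) *\<^sub>R (x, 3*t) = (x, 2*t)" by simp
  ultimately have "f (x, 2*t) \<ge> (1/2) * f (x, 1*t) + (1/2) * f (x, 3*t)" by simp
  moreover have "f (x, 1*t) = s^3 / (1 + s + s^2)" using fj[of 1] by simp
  moreover have "f (x, 2*t) = s^3 / (1 + 2 * s + s^2 / 2)" using fj[of 2] by simp
  moreover have "f (x, 3*t) = s^3 / (1 + 3 * s + s^2 / 3)" using fj[of 3] by simp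
  ultimately show False using key_ineq[OF s] by linarith
qed

end
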